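(* Let $\mathcal X=\{1,\dots,N\}$ with $N\ge2$, let $T\ge2$, let $\mathrm{PWS}$ be a piecewise stationary source for sequences of length $T$ with complexity $C_{\mathrm{PWS}}$, and let $u$ be the uniform distribution on $\mathcal X$. Let $\mathrm{PS}$ be the Probability Smoothing model with share factors $\varepsilon_t=\frac1{t+1}$, smoothing rates $\alpha_t=\exp\!\Big(-\sqrt{\frac{\log(N/\varepsilon_t)}{2Nt}}\Big)$, and an initial distribution $p$ with $p(x)\ge\frac{\varepsilon_1}{N-1}$ for all $x\in\mathcal X$. Then for every sequence $x_{1:T}\in\mathcal X^T$, \[ \ell_{\mathrm{PS}}(x_{1:T})\le\ell_{\mathrm{PWS}}(x_{1:T})+\sqrt{2N(T+1)\log(N(T+1))}\cdot(1+C_{\mathrm{PWS}})+\sqrt{\frac{128NT}{\log T}}+O(N\log T). \]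
   Context: All logarithms are natural, with $\log\frac10=+\infty$. A model maps each finite sequence $x_{1:t}$ over $\mathcal X$ (including the empty one) to a distribution on $\mathcal X$; $M(x;x_{1:t})$ denotes the probability of $x$. Code length: $\ell_M(x_{1:T})=\sum_{t=1}^T\log\frac1{M(x_t;x_{<t})}$ with $x_{<t}=x_{1:t-1}$. Probability Smoothing with parameters $(\alpha_{1:\infty},\varepsilon_{1:\infty},p)$: $\mathrm{PS}(\cdot;\text{empty})=p$, and for $t\ge1$, $\mathrm{PS}(x;x_{1:t})=\alpha_t\,\mathrm{PS}(x;x_{<t})+(1-\alpha_t)(1-\varepsilon_t)$ if $x=x_t$ and $=\alpha_t\,\mathrm{PS}(x;x_{<t})+(1-\alpha_t)\frac{\varepsilon_t}{N-1}$ if $x\ne x_t$. A piecewise stationary source (PWS) for length $T$ is given by a partition $\mathcal P$ of $\{1,\dots,T\}$ into consecutive integer intervals $[t_1,t_2),\dots,[t_n,t_{n+1})$ ($1=t_1<\dots<t_{n+1}=T+1$, $[i,j)=\{i,\dots,j-1\}$) and distributions $\{p_S\}_{S\in\mathcal P}$; $\ell_{\mathrm{PWS}}(x_{1:T})=\sum_{S\in\mathcal P}\sum_{t\in S}\log\frac1{p_S(x_t)}$. The transition set $\mathcal T$ consists of the triples $(t,A,B)$ with $A=[i,t)$, $B=[t,j)$ both in $\mathcal P$; the complexity is $C_{\mathrm{PWS}}=1+\sum_{(t,A,B)\in\mathcal T}\lVert p_B-p_A\rVert$ with $\lVert p-q\rVert=\sum_x|p(x)-q(x)|$. The term $O(N\log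 T)$ denotes a quantity (depending on $N$, $T$ and $p$) that, for fixed $N$, grows at most proportionally to $N\log T$ as $T\to\infty$. *)

theory Defs
  imports "HOL-Analysis.Analysis" "HOL-Library.Extended_Real"
begin

text \<open>Alphabet is {1..N}; sequences are functions xs :: nat => nat, with x_t = xs t for t = 1..T.\<close>

definition nlog :: "real \<Rightarrow> ereal" where
  "nlog q = (if q \<le> 0 then \<infinity> else ereal (ln (1 / q)))"

definition is_dist :: "nat \<Rightarrow> (nat \<Rightarrow> real) \<Rightarrow> bool" where
  "is_dist N p \<longleftrightarrow> (\<forall>x\<in>{1..N}. 0 \<le> p x) \<and> (\<Sum>x=1..N. p x) = 1"

text \<open>Probability Smoothing: PS_dist N alpha eps p xs t is the distribution PS(.; x_{1:t}).\<close>
fun PS_dist :: "nat \<Rightarrow> (nat \<Rightarrow> real) \<Rightarrow> (nat \<Rightarrow> real) \<Rightarrow> (nat \<Rightarrow> real) \<Rightarrow> (nat \<Rightarrow> nat)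
                 \<Rightarrow> nat \<Rightarrow> nat \<Rightarrow> real" where
  "PS_dist N alpha eps p xs 0 x = p x"
| "PS_dist N alpha eps p xs (Suc t) x =
     alpha (Suc t) * PS_dist N alpha eps p xs t x
     + (1 - alpha (Suc t)) *
       (if x = xs (Suc t) then 1 - eps (Suc t) else eps (Suc t) / (real N - 1))"

definition code_len_PS :: "nat \<Rightarrow> (nat \<Rightarrow> real) \<Rightarrow> (nat \<Rightarrow> real) \<Rightarrow> (nat \<Rightarrow> real)
                 \<Rightarrow> (nat \<Rightarrow> nat) \<Rightarrow> nat \<Rightarrow> ereal" where
  "code_len_PS N alpha eps p xs T =
     (\<Sum>t=1..T. nlog (PS_dist N alpha eps p xs (t - 1) (xs t)))"

definition is_PWS :: "nat \<Rightarrow> nat \<Rightarrow> nat \<Rightarrow> (nat \<Rightarrow> nat) \<Rightarrow> (nat \<Rightarrow> nat \<Rightarrow> real) \<Rightarrow> bool" where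
  "is_PWS N T n ts q \<longleftrightarrow> 1 \<le> n \<and> ts 1 = 1 \<and> ts (n + 1) = T + 1
     \<and> (\<forall>i\<in>{1..n}. ts i < ts (i + 1)) \<and> (\<forall>i\<in>{1..n}. is_dist N (q i))"

definition code_len_PWS :: "nat \<Rightarrow> (nat \<Rightarrow> nat) \<Rightarrow> (nat \<Rightarrow> nat \<Rightarrow> real) \<Rightarrow> (nat \<Rightarrow> nat) \<Rightarrow> ereal" where
  "code_len_PWS n ts q xs = (\<Sum>i=1..n. \<Sum>t\<in>{ts i..<ts (i + 1)}. nlog (q i (xs t)))"

definition complexity_PWS :: "nat \<Rightarrow> nat \<Rightarrow> (nat \<Rightarrow> nat \<Rightarrow> real) \<Rightarrow> real" where
  "complexity_PWS N n q = 1 + (\<Sum>i=1..n-1. \<Sum>x=1..N. \<bar>q (i + 1) x - q i x\<bar>)"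

definition eps_thm :: "nat \<Rightarrow> real" where
  "eps_thm t = 1 / (real t + 1)"

definition alpha_thm :: "nat \<Rightarrow> nat \<Rightarrow> real" where
  "alpha_thm N t = exp (- sqrt (ln (real N / eps_thm t) / (2 * real N * real t)))"

end

theory Submission
  imports Defs
begin


lemma eps_thm_pos: "eps_thm t > 0" by (simp add: eps_thm_def)

locale PSS =
  fixes N :: nat and p :: "nat \<Rightarrow> real" and xs :: "nat \<Rightarrow> nat"
  assumes N2: "N \<ge> 2" and pd: "is_dist N p"
    and pb: "\<forall>x\<in>{1..N}. p x \<ge> eps_thm 1 / (real N - 1)"
begin

definition P where "P = PS_dist N (alpha_thm N) eps_thm p xs"
definition s where "s t = sqrt (ln (real N * (real t + 1)) / (2 * real N * real t))"
definition Lam where "Lam t = ln (real N * (real t + 1))"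
definition c where "c t = 1 / (1 - exp (- s t))"

lemma Lam_pos: "t \<ge> 1 \<Longrightarrow> Lam t > 0"
proof -
  assume "t \<ge> 1"
  have a: "real N \<ge> 2" "real t + 1 \<ge> 2" using N2 \<open>t\<ge>1\<close> by auto
  have "real N * (real t + 1) \<ge> 2 * 2" using a by (intro mult_mono) auto
  then have "real N * (real t + 1) > 1" by simp
  then show ?thesis by (simp add: Lam_def)
qed

lemma Lam_mono: "1 \<le> t \<Longrightarrow> t \<le> u \<Longrightarrow> Lam t \<le> Lam u"
  unfolding Lam_def using N2 by (intro ln_mono) (auto intro: mult_left_mono)

lemma s_pos: "t \<ge> 1 \<Longrightarrow> s t > 0"
  using Lam_pos[of t] N2 unfolding s_def Lam_def by (auto intro!: divide_pos_pos)

lemma alpha_eq: "t \<ge> 1 \<Longrightarrow> alpha_thm N t = exp (- s t)"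
  unfolding alpha_thm_def s_def eps_thm_def by (simp add: field_simps)

lemma s_sq: "t \<ge> 1 \<Longrightarrow> (s t)^2 = Lam t / (2 * real N * real t)"
  using Lam_pos[of t] N2 unfolding s_def Lam_def by (simp)

lemma P_suc: "P (Suc t) y = exp (- s (Suc t)) * P t y + (1 - exp (- s (Suc t))) *
       (if y = xs (Suc t) then 1 - 1/(real t + 2) else 1/(real t + 2) / (real N - 1))"
  unfolding P_def using alpha_eq[of "Suc t"] by (simp add: eps_thm_def add.commute)

lemma p_le1: "y \<in> {1..N} \<Longrightarrow> p y \<le> 1"
proof -
  assume y: "y \<in> {1..N}"
  have "p y \<le> (\<Sum>x=1..N. p x)" using pd y unfolding is_dist_def
    by (intro member_le_sum) auto
  then show ?thesis using pd unfolding is_dist_def by simp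
qed

lemma P_bounds: "y \<in> {1..N} \<Longrightarrow> P t y \<ge> 1 / ((real N - 1) * (real t + 2)) \<and> P t y \<le> 1"
proof (induction t)
  case 0
  then show ?case using pb p_le1 by (simp add: P_def eps_thm_def mult.commute)
next
  case (Suc t)
  define a where "a = exp (- s (Suc t))"
  have a: "0 < a" "a < 1" using s_pos[of "Suc t"] by (auto simp: a_def)
  define E where "E = (if y = xs (Suc t) then 1 - 1/(real t + 2) else 1/(real t + 2) / (real N - 1))"
  have N1: "real N - 1 \<ge> 1" using N2 by simp
  have lb: "1 / ((real N - 1) * (real t + 3)) \<le> 1 / ((real N - 1) * (real t + 2))"
    using N1 by (intro divide_left_mono mult_left_mono mult_pos_pos) auto
  have E1: "E \<ge> 1 / ((real N - 1) * (real t + 2))"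
  proof (cases "y = xs (Suc t)")
    case True
    have "1 / ((real N - 1) * (real t + 2)) \<le> 1/(real t + 2)"
      using N1 by (intro divide_left_mono) auto
    also have "\<dots> \<le> 1 - 1/(real t + 2)" by (simp add: field_simps)
    finally show ?thesis using True by (simp add: E_def)
  qed (simp add: E_def field_simps)
  have E2: "E \<le> 1"
  proof (cases "y = xs (Suc t)")
    case False
    have "1/(real t + 2) / (real N - 1) \<le> 1/(real t + 2)" using N1
      by (simp add: divide_le_eq mult_le_cancel_left1)
    also have "\<dots> \<le> 1" by simp
    finally show ?thesis using False by (simp add: E_def)
  qed (simp add: E_def)
  have IH: "P t y \<ge> 1 / ((real N - 1) * (real t + 2))" "P t y \<le> 1" using Suc by auto
  have eq: "P (Suc t) y = a * P t y + (1 - a) * E" unfolding P_suc a_def E_def by simp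
  have "1 / ((real N - 1) * (real (Suc t) + 2)) \<le> a * (1 / ((real N - 1) * (real t + 2))) + (1 - a) * (1 / ((real N - 1) * (real t + 2)))"
  proof -
    have e1: "a * (1 / ((real N - 1) * (real t + 2))) + (1 - a) * (1 / ((real N - 1) * (real t + 2))) = 1 / ((real N - 1) * (real t + 2))"
      by (metis add_diff_cancel_left' diff_add_cancel distrib_right mult_1)
    have e: "real (Suc t) + 2 = real t + 3" by simp
    show ?thesis unfolding e using lb e1 by linarith
  qed
  also have "\<dots> \<le> P (Suc t) y" unfolding eq using a IH E1
    by (intro add_mono mult_left_mono) auto
  finally have 1: "1 / ((real N - 1) * (real (Suc t) + 2)) \<le> P (Suc t) y" .
  have "P (Suc t) y \<le> a * 1 + (1 - a) * 1" unfolding eq using a IH E2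
    by (intro add_mono mult_left_mono) auto
  then show ?case using 1 by simp
qed


lemma E_nonneg: "0 \<le> (if y = xs (Suc t) then 1 - 1/(real t + 2) else 1/(real t + 2) / (real N - 1))"
proof -
  have "1/(real t + 2) \<le> 1" by simp
  moreover have "0 \<le> 1/(real t + 2) / (real N - 1)" using N2 by (intro divide_nonneg_nonneg) auto
  ultimately show ?thesis by auto
qed

lemma P_lb_Suc:
  assumes y: "y \<in> {1..N}"
  shows "P (Suc t) y \<ge> 1 / ((real N - 1) * (real t + 2))"
proof -
  define a where "a = exp (- s (Suc t))"
  have a: "0 < a" "a < 1" using s_pos[of "Suc t"] by (auto simp: a_def)
  define E where "E = (if y = xs (Suc t) then 1 - 1/(real t + 2) else 1/(real t + 2) / (real N - 1))"
  have N1: "real N - 1 \<ge> 1" using N2 by simp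
  have E1: "E \<ge> 1 / ((real N - 1) * (real t + 2))"
  proof (cases "y = xs (Suc t)")
    case True
    have "1 / ((real N - 1) * (real t + 2)) \<le> 1/(real t + 2)"
      using N1 by (intro divide_left_mono) auto
    also have "\<dots> \<le> 1 - 1/(real t + 2)" by (simp add: field_simps)
    finally show ?thesis using True by (simp add: E_def)
  qed (simp add: E_def field_simps)
  have IH: "P t y \<ge> 1 / ((real N - 1) * (real t + 2))" using P_bounds[OF y, of t] by auto
  have eq: "P (Suc t) y = a * P t y + (1 - a) * E" unfolding P_suc a_def E_def by simp
  have e1: "a * (1 / ((real N - 1) * (real t + 2))) + (1 - a) * (1 / ((real N - 1) * (real t + 2))) = 1 / ((real N - 1) * (real t + 2))"
    by (metis add_diff_cancel_left' diff_add_cancel distrib_right mult_1)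
  have "a * (1 / ((real N - 1) * (real t + 2))) + (1 - a) * (1 / ((real N - 1) * (real t + 2))) \<le> P (Suc t) y"
    unfolding eq using a IH E1 by (intro add_mono mult_left_mono) auto
  then show ?thesis using e1 by linarith
qed

lemma P_pos: "y \<in> {1..N} \<Longrightarrow> P t y > 0"
proof -
  assume y: "y \<in> {1..N}"
  have "0 < 1 / ((real N - 1) * (real t + 2))" using N2 by (auto intro!: divide_pos_pos mult_pos_pos)
  then show ?thesis using P_bounds[OF y, of t] by linarith
qed

lemma P_le1: "y \<in> {1..N} \<Longrightarrow> P t y \<le> 1" using P_bounds by blast

lemma lnP_bounds:
  assumes y: "y \<in> {1..N}" and t: "t \<ge> 1"
  shows "0 \<le> ln (1 / P t y) \<and> ln (1 / P t y) \<le> Lam t"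
proof -
  obtain k where k: "t = Suc k" using t by (cases t) auto
  have pp: "P t y > 0" using P_pos[OF y] .
  have "1 / (real N * (real t + 1)) \<le> 1 / ((real N - 1) * (real k + 2))"
    using N2 k by (intro divide_left_mono mult_mono mult_pos_pos) auto
  also have "\<dots> \<le> P t y" using P_lb_Suc[OF y, of k] k by simp
  finally have lb: "1 / (real N * (real t + 1)) \<le> P t y" .
  have Xp: "real N * (real t + 1) > 0" using N2 by auto
  have "1 \<le> P t y * (real N * (real t + 1))" using lb Xp by (simp add: divide_le_eq)
  then have "1 / P t y \<le> real N * (real t + 1)" using pp by (simp add: divide_le_eq mult.commute)
  then have "ln (1 / P t y) \<le> Lam t" unfolding Lam_def using pp by (intro ln_mono) auto
  moreover have "0 \<le> ln (1 / P t y)" using pp P_le1[OF y, of t] by simp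
  ultimately show ?thesis by simp
qed

lemma lnP0_bounds:
  assumes y: "y \<in> {1..N}"
  shows "0 \<le> ln (1 / P 0 y) \<and> ln (1 / P 0 y) \<le> Lam 1"
proof -
  have pp: "P 0 y > 0" using P_pos[OF y] .
  have "1 / (real N * 2) \<le> 1 / ((real N - 1) * 2)"
    using N2 by (intro divide_left_mono mult_mono mult_pos_pos) auto
  also have "\<dots> \<le> P 0 y" using P_bounds[OF y, of 0] by simp
  finally have lb: "1 / (real N * 2) \<le> P 0 y" .
  have Xp: "real N * 2 > 0" using N2 by auto
  have "1 \<le> P 0 y * (real N * 2)" using lb Xp by (simp add: divide_le_eq)
  then have "1 / P 0 y \<le> real N * 2" using pp by (simp add: divide_le_eq mult.commute)
  then have "ln (1 / P 0 y) \<le> Lam 1" unfolding Lam_def using pp by (intro ln_mono) auto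
  moreover have "0 \<le> ln (1 / P 0 y)" using pp P_le1[OF y, of 0] by simp
  ultimately show ?thesis by simp
qed

definition Phi where "Phi t q = (\<Sum>y=1..N. q y * ln (1 / P t y))"

lemma Phi_bounds:
  assumes q: "is_dist N q" and t: "t \<ge> 1"
  shows "0 \<le> Phi t q \<and> Phi t q \<le> Lam t"
proof -
  have "Phi t q \<le> (\<Sum>y=1..N. q y * Lam t)" unfolding Phi_def
    using q lnP_bounds[OF _ t] unfolding is_dist_def by (intro sum_mono mult_left_mono) auto
  also have "\<dots> = Lam t" using q unfolding is_dist_def by (simp add: sum_distrib_right[symmetric])
  finally have 1: "Phi t q \<le> Lam t" .
  have "0 \<le> Phi t q" unfolding Phi_def
    using q lnP_bounds[OF _ t] unfolding is_dist_def by (intro sum_nonneg mult_nonneg_nonneg) auto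
  then show ?thesis using 1 by simp
qed

lemma Phi0_bound:
  assumes q: "is_dist N q"
  shows "Phi 0 q \<le> Lam 1"
proof -
  have "Phi 0 q \<le> (\<Sum>y=1..N. q y * Lam 1)" unfolding Phi_def
    using q lnP0_bounds unfolding is_dist_def by (intro sum_mono mult_left_mono) auto
  also have "\<dots> = Lam 1" using q unfolding is_dist_def by (simp add: sum_distrib_right[symmetric])
  finally show ?thesis .
qed

lemma Phi_diff:
  assumes q: "is_dist N q" and q': "is_dist N q'" and t: "t \<ge> 1"
  shows "Phi t q' - Phi t q \<le> Lam t / 2 * (\<Sum>y=1..N. \<bar>q' y - q y\<bar>)"
proof -
  have s0: "(\<Sum>y=1..N. (q' y - q y) * (Lam t / 2)) = 0"
  proof -
    have "(\<Sum>y=1..N. (q' y - q y) * (Lam t / 2)) = (\<Sum>y=1..N. (q' y - q y)) * (Lam t / 2)"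
      by (rule sum_distrib_right[symmetric])
    also have "(\<Sum>y=1..N. (q' y - q y)) = 0" using q q' unfolding is_dist_def by (simp add: sum_subtractf)
    finally show ?thesis by simp
  qed
  have "Phi t q' - Phi t q = (\<Sum>y=1..N. (q' y - q y) * ln (1 / P t y))"
    unfolding Phi_def by (simp add: sum_subtractf[symmetric] algebra_simps)
  also have "\<dots> = (\<Sum>y=1..N. (q' y - q y) * (ln (1 / P t y) - Lam t / 2))"
  proof -
    have e2: "(\<Sum>y=1..N. (q' y - q y) * (ln (1 / P t y) - Lam t / 2)) = (\<Sum>y=1..N. (q' y - q y) * ln (1 / P t y)) - (\<Sum>y=1..N. (q' y - q y) * (Lam t / 2))"
      by (simp only: right_diff_distrib sum_subtractf)
    then show ?thesis using s0 by linarith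
  qed
  also have "\<dots> \<le> (\<Sum>y=1..N. \<bar>q' y - q y\<bar> * (Lam t / 2))"
  proof (intro sum_mono)
    fix y assume y: "y \<in> {1..N}"
    have b: "\<bar>ln (1 / P t y) - Lam t / 2\<bar> \<le> Lam t / 2" using lnP_bounds[OF y t] unfolding abs_le_iff by linarith
    have "(q' y - q y) * (ln (1 / P t y) - Lam t / 2) \<le> \<bar>(q' y - q y) * (ln (1 / P t y) - Lam t / 2)\<bar>"
      by simp
    also have "\<dots> = \<bar>q' y - q y\<bar> * \<bar>ln (1 / P t y) - Lam t / 2\<bar>" by (simp add: abs_mult)
    also have "\<dots> \<le> \<bar>q' y - q y\<bar> * (Lam t / 2)" using b by (intro mult_left_mono) auto
    finally show "(q' y - q y) * (ln (1 / P t y) - Lam t / 2) \<le> \<bar>q' y - q y\<bar> * (Lam t / 2)" .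
  qed
  also have "\<dots> = Lam t / 2 * (\<Sum>y=1..N. \<bar>q' y - q y\<bar>)"
    by (simp only: sum_distrib_left mult.commute)
  finally show ?thesis .
qed

lemma P_ratio_lb:
  assumes y: "y \<in> {1..N}"
  shows "ln (P (Suc k) y / P k y) \<ge> - s (Suc k)"
proof -
  have pk: "P k y > 0" using P_pos[OF y] .
  have "exp (- s (Suc k)) * P k y \<le> P (Suc k) y"
    unfolding P_suc using E_nonneg[of y k] s_pos[of "Suc k"]
    by (intro add_increasing2 mult_nonneg_nonneg) auto
  then have "exp (- s (Suc k)) \<le> P (Suc k) y / P k y" using pk by (simp add: field_simps)
  then have "ln (exp (- s (Suc k))) \<le> ln (P (Suc k) y / P k y)"
    by (intro ln_mono) auto
  then show ?thesis by simp
qed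

lemma Phi_drop:
  assumes q: "is_dist N q" and x: "xs (Suc k) \<in> {1..N}"
  shows "Phi k q - Phi (Suc k) q \<ge>
     q (xs (Suc k)) * (ln (P (Suc k) (xs (Suc k)) / P k (xs (Suc k))) + s (Suc k)) - s (Suc k)"
proof -
  define D where "D y = ln (P (Suc k) y / P k y)" for y
  have "Phi k q - Phi (Suc k) q = (\<Sum>y=1..N. q y * ln (1 / P k y) - q y * ln (1 / P (Suc k) y))"
    unfolding Phi_def by (simp only: sum_subtractf)
  also have "\<dots> = (\<Sum>y=1..N. q y * D y)"
  proof (rule sum.cong[OF refl])
    fix y assume y: "y \<in> {1..N}"
    have "P k y > 0" "P (Suc k) y > 0" using P_pos[OF y] by auto
    then show "q y * ln (1 / P k y) - q y * ln (1 / P (Suc k) y) = q y * D y"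
      unfolding D_def by (simp add: ln_div algebra_simps)
  qed
  finally have eq: "Phi k q - Phi (Suc k) q = (\<Sum>y=1..N. q y * D y)" .
  have "(\<Sum>y=1..N. q y * D y) = (\<Sum>y=1..N. q y * (D y + s (Suc k))) - s (Suc k)"
    using q unfolding is_dist_def by (simp add: algebra_simps sum.distrib sum_distrib_right[symmetric])
  moreover have "q (xs (Suc k)) * (D (xs (Suc k)) + s (Suc k)) \<le> (\<Sum>y=1..N. q y * (D y + s (Suc k)))"
  proof (rule member_le_sum[OF x])
    fix y assume y: "y \<in> {1..N} - {xs (Suc k)}"
    then have y': "y \<in> {1..N}" by simp
    have "0 \<le> D y + s (Suc k)" using P_ratio_lb[OF y', of k] unfolding D_def by linarith
    then show "0 \<le> q y * (D y + s (Suc k))" using q y' unfolding is_dist_def by simp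
  qed simp
  ultimately show ?thesis using eq unfolding D_def by linarith
qed

end


lemma key_ineq:
  fixes u a s e w G :: real
  assumes u: "0 < u" and a: "0 < a" and s: "0 < s" and e: "0 < e" "e < 1"
    and w: "w = exp (- s) + (1 - exp (- s)) * (1 - e) / a"
    and G: "G \<ge> u * (ln w + s) - s"
  shows "ln (1 / a) - ln (1 / u) \<le> G / (1 - exp (- s)) + ln w + s - ln (1 - e)"
proof -
  define al where "al = exp (- s)"
  define be where "be = 1 - al"
  have al: "0 < al" "al < 1" using s by (auto simp: al_def)
  have be: "0 < be" using al by (simp add: be_def)
  have wa: "w - al = be * (1 - e) / a" using w by (simp add: al_def be_def)
  have wa_pos: "w - al > 0" unfolding wa using be e a by (auto intro!: divide_pos_pos mult_pos_pos)
  have wpos: "w > 0" using wa_pos al by linarith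
  define L where "L = ln w + s"
  have L_eq: "L = ln (w / al)" using wpos al by (simp add: L_def ln_div al_def)
  have v1: "w / al > 1" using wa_pos al by (simp add: field_simps)
  have Lpos: "L > 0" unfolding L_eq using v1 by simp
  have uLb: "u * L / be > 0" using u Lpos be by simp
  have st1: "ln (u * L / be) \<le> u * L / be - 1" using ln_le_minus_one[OF uLb] .
  have lnuLb: "ln (u * L / be) = ln u + ln L - ln be" using u Lpos be by (simp add: ln_div ln_mult)
  have st2: "ln be - ln a = ln (w - al) - ln (1 - e)"
  proof -
    have "ln (w - al) = ln be + ln (1 - e) - ln a" unfolding wa using be e a by (simp add: ln_div ln_mult)
    then show ?thesis by simp
  qed
  have st3: "w - al \<le> w * L"
  proof -
    have "ln (al / w) \<le> al / w - 1" using ln_le_minus_one[of "al / w"] al wpos by simp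
    moreover have "ln (al / w) = - L" unfolding L_eq using al wpos by (simp add: ln_div)
    ultimately have "1 - al / w \<le> L" by simp
    then have "w * (1 - al / w) \<le> w * L" using wpos by (intro mult_left_mono) auto
    then show ?thesis using wpos by (simp add: algebra_simps)
  qed
  have st3': "ln (w - al) \<le> ln w + ln L"
  proof -
    have "ln (w - al) \<le> ln (w * L)" using st3 wa_pos by (intro ln_mono) auto
    then show ?thesis using wpos Lpos by (simp add: ln_mult)
  qed
  have st4: "s * al \<le> be"
  proof -
    have "1 + s \<le> exp s" by (rule exp_ge_add_one_self)
    then have "exp (- s) * (1 + s) \<le> exp (- s) * exp s" by (intro mult_left_mono) auto
    then have "exp (- s) * (1 + s) \<le> 1" by (simp add: exp_minus field_simps)
    then show ?thesis by (simp add: al_def be_def algebra_simps)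
  qed
  have st4': "s / be - s \<le> 1"
  proof -
    have "s / be - s = s * al / be" using be by (simp add: field_simps be_def)
    also have "\<dots> \<le> 1" using st4 be by (simp add: divide_le_eq)
    finally show ?thesis .
  qed
  have Gb: "G / be \<ge> u * L / be - s / be"
  proof -
    have "(u * L - s) / be \<le> G / be" using G be by (intro divide_right_mono) (auto simp: L_def)
    then show ?thesis by (simp add: diff_divide_distrib)
  qed
  have "ln (1 / a) - ln (1 / u) = ln u - ln a" using u a by (simp add: ln_div)
  also have "\<dots> \<le> u * L / be - 1 + ln w - ln (1 - e)"
    using st1 lnuLb st2 st3' by linarith
  also have "\<dots> \<le> G / be + ln w + s - ln (1 - e)" using Gb st4' by linarith
  finally show ?thesis by (simp add: be_def al_def)
qed


lemma sum_inv_sqrt: "(\<Sum>t=1..T. 1 / sqrt (real t)) \<le> 2 * sqrt (real T)"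
proof (induction T)
  case 0 then show ?case by simp
next
  case (Suc T)
  have st: "sqrt (real T) \<le> sqrt (real T + 1)" by simp
  have sp: "sqrt (real T + 1) > 0" by simp
  have a: "2 * (sqrt (real T) * sqrt (real T + 1)) \<le> 2 * real T + 1"
  proof -
    have "sqrt (real T) * sqrt (real T + 1) = sqrt (real T * (real T + 1))" by (simp add: real_sqrt_mult)
    also have "\<dots> \<le> real T + 1/2"
      by (rule real_le_lsqrt) (auto simp: power2_eq_square algebra_simps)
    finally show ?thesis by simp
  qed
  have "1 / sqrt (real T + 1) \<le> 2 * sqrt (real T + 1) - 2 * sqrt (real T)"
  proof -
    have "1 \<le> (2 * sqrt (real T + 1) - 2 * sqrt (real T)) * sqrt (real T + 1)"
      using a by (simp add: algebra_simps)
    then show ?thesis using sp by (simp add: divide_le_eq)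
  qed
  then show ?case using Suc by (simp add: add.commute)
qed

lemma telescope1: fixes g :: "nat \<Rightarrow> real" shows "(\<Sum>t=1..T. (g t - g (t - 1))) = g T - g 0"
  by (induction T) auto

context PSS
begin

lemma Lam_ge1: "t \<ge> 1 \<Longrightarrow> Lam t \<ge> 1"
proof -
  assume t: "t \<ge> 1"
  have "exp 1 < (272/100::real)" by (rule e_less_272)
  have a: "real N \<ge> 2" "real t + 1 \<ge> 2" using N2 t by auto
  have "real N * (real t + 1) \<ge> 2 * 2" using a by (intro mult_mono) auto
  then have "exp 1 \<le> real N * (real t + 1)" using e_less_272 by linarith
  then have "ln (exp 1) \<le> Lam t" unfolding Lam_def by (intro ln_mono) auto
  then show ?thesis by simp
qed

lemma s_mono: assumes t: "1 \<le> t" shows "s (Suc t) \<le> s t"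
proof -
  have Lp: "Lam t > 0" using Lam_pos t by auto
  have "Lam (Suc t) = Lam t + ln ((real t + 2) / (real t + 1))"
    unfolding Lam_def using N2 by (simp add: ln_mult ln_div add.commute)
  also have "ln ((real t + 2) / (real t + 1)) \<le> (real t + 2) / (real t + 1) - 1"
    by (rule ln_le_minus_one) auto
  also have "(real t + 2) / (real t + 1) - 1 = 1 / (real t + 1)" by (simp add: field_simps)
  finally have L1: "Lam (Suc t) \<le> Lam t + 1 / (real t + 1)" by simp
  have "real t * Lam (Suc t) \<le> real t * (Lam t + 1 / (real t + 1))"
    by (rule mult_left_mono[OF L1]) simp
  then have "real t * Lam (Suc t) \<le> real t * Lam t + real t / (real t + 1)"
    by (simp add: distrib_left)
  also have "real t / (real t + 1) \<le> 1" by simp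
  also have "1 \<le> Lam t" using Lam_ge1 t by auto
  finally have key: "real t * Lam (Suc t) \<le> (real t + 1) * Lam t" by (simp add: algebra_simps)
  have "Lam (Suc t) / (2 * real N * real (Suc t)) \<le> Lam t / (2 * real N * real t)"
  proof -
    have tp: "real t > 0" "real N > 0" using t N2 by auto
    have Q: "real t * (2 * real N * real (Suc t)) = (real t + 1) * (2 * real N * real t)"
      by (simp add: algebra_simps)
    have "Lam (Suc t) / (2 * real N * real (Suc t)) = (real t * Lam (Suc t)) / (real t * (2 * real N * real (Suc t)))"
      using tp by simp
    also have "\<dots> = (real t * Lam (Suc t)) / ((real t + 1) * (2 * real N * real t))" using Q by simp
    also have "\<dots> \<le> ((real t + 1) * Lam t) / ((real t + 1) * (2 * real N * real t))"
      using key tp by (intro divide_right_mono) auto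
    also have "\<dots> = Lam t / (2 * real N * real t)" by simp
    finally show ?thesis .
  qed
  then show ?thesis unfolding s_def Lam_def by simp
qed

lemma c_pos: "1 \<le> t \<Longrightarrow> c t > 0"
  using s_pos[of t] by (simp add: c_def)

lemma c_mono: assumes t: "1 \<le> t" shows "c t \<le> c (Suc t)"
proof -
  have "exp (- s t) \<le> exp (- s (Suc t))" using s_mono[OF t] by simp
  moreover have "exp (- s (Suc t)) < 1" using s_pos[of "Suc t"] by simp
  ultimately show ?thesis unfolding c_def by (intro divide_left_mono mult_pos_pos) auto
qed

lemma c_le: assumes t: "1 \<le> t" shows "c t \<le> 1 + 1 / s t"
proof -
  have sp: "s t > 0" using s_pos t by auto
  have "exp (- s t) * (1 + s t) \<le> exp (- s t) * exp (s t)" by (intro mult_left_mono) auto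
  then have e: "exp (- s t) * (1 + s t) \<le> 1" by (simp add: exp_minus field_simps)
  have pos: "1 - exp (- s t) > 0" using sp by simp
  have "s t \<le> (1 - exp (- s t)) * (1 + s t)" using e by (simp add: algebra_simps)
  then have "s t / (1 + s t) \<le> 1 - exp (- s t)" using sp by (simp add: pos_divide_le_eq)
  then have "1 / (1 - exp (- s t)) \<le> 1 / (s t / (1 + s t))" using sp pos
    by (intro divide_left_mono) auto
  then show ?thesis using sp by (simp add: c_def field_simps)
qed

lemma s_Lam: "s t = sqrt (Lam t / (2 * real N * real t))" by (simp add: s_def Lam_def)

lemma s_times_X: assumes t: "1 \<le> t" shows "s t * sqrt (2 * real N * real t * Lam t) = Lam t"
proof -
  have Lp: "Lam t > 0" using Lam_pos t by auto
  have "s t * sqrt (2 * real N * real t * Lam t) = sqrt (Lam t / (2 * real N * real t) * (2 * real N * real t * Lam t))"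
    unfolding s_Lam by (rule real_sqrt_mult[symmetric])
  also have "Lam t / (2 * real N * real t) * (2 * real N * real t * Lam t) = (Lam t)^2"
    using t N2 by (simp add: power2_eq_square)
  finally show ?thesis using Lp by simp
qed

lemma Lam_div_s: assumes t: "1 \<le> t" shows "Lam t / s t = sqrt (2 * real N * real t * Lam t)"
  using s_times_X[OF t] s_pos[OF t] by (simp add: field_simps)

lemma Lam_le_X: assumes t: "1 \<le> t" shows "Lam t \<le> sqrt (2 * real N * real t * Lam t)"
proof (rule real_le_rsqrt)
  have Lp: "Lam t > 0" using Lam_pos t by auto
  have "Lam t \<le> real N * (real t + 1) - 1" unfolding Lam_def
    using N2 by (intro ln_le_minus_one) auto
  also have "\<dots> \<le> 2 * real N * real t"
  proof -
    have "real N * 1 \<le> real N * real t" using t by (intro mult_left_mono) auto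
    then show ?thesis by (simp add: algebra_simps)
  qed
  finally have "Lam t * Lam t \<le> (2 * real N * real t) * Lam t" using Lp by (intro mult_right_mono) auto
  then show "(Lam t)^2 \<le> 2 * real N * real t * Lam t" by (simp add: power2_eq_square)
qed

definition K where "K T = sqrt (2 * real N * (real T + 1) * ln (real N * (real T + 1)))"

lemma X_le_K: assumes "1 \<le> m" "m \<le> T" shows "sqrt (2 * real N * real m * Lam m) \<le> K T"
proof -
  have "Lam m \<le> Lam T" using Lam_mono assms by auto
  moreover have "Lam m \<ge> 0" using Lam_pos assms by (auto intro: less_imp_le)
  moreover have "2 * real N * real m \<le> 2 * real N * (real T + 1)" using assms by (intro mult_left_mono) auto
  ultimately have "2 * real N * real m * Lam m \<le> 2 * real N * (real T + 1) * Lam T"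
    using assms by (intro mult_mono) auto
  then show ?thesis unfolding K_def Lam_def by simp
qed

lemma trans_bound: assumes "1 \<le> tau" "tau + 1 \<le> T"
  shows "c (tau + 1) * (Lam tau / 2) \<le> K T"
proof -
  define m where "m = tau + 1"
  have m: "1 \<le> m" "m \<le> T" using assms by (auto simp: m_def)
  have Lt: "0 \<le> Lam tau" "Lam tau \<le> Lam m" using Lam_pos Lam_mono assms by (auto simp: m_def intro: less_imp_le)
  have "c m * (Lam tau / 2) \<le> c m * (Lam m / 2)" using c_pos[OF m(1)] Lt by (intro mult_left_mono) auto
  also have "\<dots> \<le> (1 + 1 / s m) * (Lam m / 2)" using c_le[OF m(1)] Lam_pos[OF m(1)] by (intro mult_right_mono) auto
  also have "\<dots> = Lam m / 2 + (Lam m / s m) / 2" by (simp add: algebra_simps)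
  also have "\<dots> \<le> sqrt (2 * real N * real m * Lam m)" using Lam_div_s[OF m(1)] Lam_le_X[OF m(1)] by simp
  also have "\<dots> \<le> K T" using X_le_K[OF m] .
  finally show ?thesis by (simp add: m_def)
qed

lemma end_bound: assumes "1 \<le> T" shows "c T * Lam T \<le> Lam T + K T"
proof -
  have "c T * Lam T \<le> (1 + 1 / s T) * Lam T" using c_le[OF assms] Lam_pos[OF assms] by (intro mult_right_mono) auto
  also have "\<dots> = Lam T + Lam T / s T" by (simp add: algebra_simps)
  also have "\<dots> \<le> Lam T + K T" using Lam_div_s[OF assms] X_le_K[OF assms order_refl] by simp
  finally show ?thesis .
qed

lemma sum_s: assumes T: "1 \<le> T" shows "real N * (\<Sum>t=1..T. s t) \<le> K T"
proof -
  define A where "A = Lam T / (2 * real N)"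
  have A: "A \<ge> 0" using Lam_pos[OF T] N2 by (simp add: A_def)
  have "(\<Sum>t=1..T. s t) \<le> (\<Sum>t=1..T. sqrt A * (1 / sqrt (real t)))"
  proof (rule sum_mono)
    fix t assume t: "t \<in> {1..T}"
    have "Lam t / (2 * real N * real t) \<le> Lam T / (2 * real N * real t)"
      using Lam_mono[of t T] t N2 by (intro divide_right_mono) auto
    then have "s t \<le> sqrt (Lam T / (2 * real N * real t))" unfolding s_def Lam_def by simp
    also have "\<dots> = sqrt A * (1 / sqrt (real t))" unfolding A_def
      by (simp add: real_sqrt_divide real_sqrt_mult)
    finally show "s t \<le> sqrt A * (1 / sqrt (real t))" .
  qed
  also have "\<dots> = sqrt A * (\<Sum>t=1..T. 1 / sqrt (real t))" by (simp add: sum_distrib_left)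
  also have "\<dots> \<le> sqrt A * (2 * sqrt (real T))" using sum_inv_sqrt A by (intro mult_left_mono) auto
  finally have 1: "real N * (\<Sum>t=1..T. s t) \<le> real N * (sqrt A * (2 * sqrt (real T)))"
    by (intro mult_left_mono) auto
  have "real N * (sqrt A * (2 * sqrt (real T))) \<le> K T" unfolding K_def
  proof (rule real_le_rsqrt)
    have "(real N * (sqrt A * (2 * sqrt (real T))))^2 = (real N)^2 * A * 4 * real T"
      using A by (simp add: power_mult_distrib)
    also have "\<dots> = 2 * real N * real T * Lam T" using N2 by (simp add: A_def power2_eq_square)
    also have "\<dots> \<le> 2 * real N * (real T + 1) * Lam T" using Lam_pos[OF T] by (intro mult_right_mono mult_left_mono) auto
    finally show "(real N * (sqrt A * (2 * sqrt (real T))))^2 \<le> 2 * real N * (real T + 1) * ln (real N * (real T + 1))"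
      by (simp add: Lam_def)
  qed
  then show ?thesis using 1 by linarith
qed

lemma sum_eps: "(\<Sum>t=1..T. - ln (1 - eps_thm t)) \<le> ln (real T + 1)"
proof -
  have "(\<Sum>t=1..T. - ln (1 - eps_thm t)) = (\<Sum>t=1..T. ln (real (Suc t)) - ln (real (Suc t - 1)))"
  proof (rule sum.cong[OF refl])
    fix t assume t: "t \<in> {1..T}"
    have "1 - eps_thm t = real t / (real t + 1)" by (simp add: eps_thm_def field_simps)
    then show "- ln (1 - eps_thm t) = ln (real (Suc t)) - ln (real (Suc t - 1))"
      using t by (simp add: ln_div add.commute)
  qed
  also have "\<dots> = ln (real (Suc T)) - ln (real (Suc 0))"
    using telescope1[of "\<lambda>t. ln (real (Suc t))" T] by simp
  finally show ?thesis by (simp add: add.commute)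
qed

end


context PSS
begin

lemma sum_lnw:
  assumes xr: "\<forall>t\<in>{1..T}. xs t \<in> {1..N}"
  shows "(\<Sum>t=1..T. ln (P t (xs t) / P (t - 1) (xs t)))
          \<le> (\<Sum>y=1..N. ln (1 / p y)) + (real N - 1) * (\<Sum>t=1..T. s t)"
proof -
  have step: "ln (P t (xs t) / P (t - 1) (xs t)) \<le> (\<Sum>y=1..N. ln (P t y) - ln (P (t - 1) y)) + (real N - 1) * s t"
    if t: "t \<in> {1..T}" for t
  proof -
    obtain k where k: "t = Suc k" using t by (cases t) auto
    have x: "xs t \<in> {1..N}" using xr t by auto
    have eqy: "ln (P t y) - ln (P (t - 1) y) = ln (P (Suc k) y / P k y)" if y: "y \<in> {1..N}" for y
      using P_pos[OF y, of t] P_pos[OF y, of k] k by (simp add: ln_div)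
    have e1: "(\<Sum>y=1..N. ln (P t y) - ln (P (t - 1) y)) = (\<Sum>y=1..N. ln (P (Suc k) y / P k y))"
      using eqy by (rule sum.cong[OF refl])
    have e2: "(\<Sum>y=1..N. ln (P (Suc k) y / P k y)) = ln (P (Suc k) (xs t) / P k (xs t)) + (\<Sum>y\<in>{1..N} - {xs t}. ln (P (Suc k) y / P k y))"
      using x by (simp add: sum.remove)
    have e3: "(\<Sum>y\<in>{1..N} - {xs t}. ln (P (Suc k) y / P k y)) \<ge> (\<Sum>y\<in>{1..N} - {xs t}. - s (Suc k))"
      by (intro sum_mono P_ratio_lb) auto
    have e4: "(\<Sum>y\<in>{1..N} - {xs t}. - s (Suc k)) = - (real N - 1) * s t"
      using x k N2 by (simp add: card_Diff_singleton of_nat_diff algebra_simps)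
    show ?thesis using e1 e2 e3 e4 k by (simp add: algebra_simps)
  qed
  have "(\<Sum>t=1..T. ln (P t (xs t) / P (t - 1) (xs t)))
        \<le> (\<Sum>t=1..T. (\<Sum>y=1..N. ln (P t y) - ln (P (t - 1) y)) + (real N - 1) * s t)"
    using step by (rule sum_mono)
  also have "\<dots> = (\<Sum>y=1..N. \<Sum>t=1..T. ln (P t y) - ln (P (t - 1) y)) + (real N - 1) * (\<Sum>t=1..T. s t)"
    by (simp add: sum.distrib sum_distrib_left) (rule sum.swap)
  also have "(\<Sum>y=1..N. \<Sum>t=1..T. ln (P t y) - ln (P (t - 1) y)) = (\<Sum>y=1..N. ln (P T y) - ln (P 0 y))"
    by (rule sum.cong[OF refl]) (rule telescope1)
  also have "\<dots> \<le> (\<Sum>y=1..N. ln (1 / p y))"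
  proof (rule sum_mono)
    fix y assume y: "y \<in> {1..N}"
    have "ln (P T y) \<le> 0" using P_pos[OF y, of T] P_le1[OF y, of T] by simp
    moreover have "P 0 y = p y" by (simp add: P_def)
    moreover have "p y > 0" using P_pos[OF y, of 0] by (simp add: P_def)
    ultimately show "ln (P T y) - ln (P 0 y) \<le> ln (1 / p y)" by (simp add: ln_div)
  qed
  finally show ?thesis by simp
qed

definition H where "H T t q = (if t < T then c (Suc t) * Phi t q else 0)"
definition dl where "dl T t = (if t < T then c (Suc t) - c t else 0)"
definition r where "r t = ln (P t (xs t) / P (t - 1) (xs t)) + s t - ln (1 - eps_thm t)"

lemma step_ineq:
  assumes t: "1 \<le> t" "t \<le> T" and q: "is_dist N q" and x: "xs t \<in> {1..N}" and u: "q (xs t) > 0"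
  shows "ln (1 / P (t - 1) (xs t)) - ln (1 / q (xs t)) \<le> H T (t - 1) q - H T t q + Lam T * dl T t + r t"
proof -
  obtain k where k: "t = Suc k" using t by (cases t) auto
  define a where "a = P k (xs t)"
  define w where "w = P t (xs t) / P k (xs t)"
  define G where "G = Phi k q - Phi t q"
  have apos: "a > 0" using P_pos[OF x] by (simp add: a_def)
  have e: "0 < eps_thm t" "eps_thm t < 1" using t by (auto simp: eps_thm_def)
  have weq: "w = exp (- s t) + (1 - exp (- s t)) * (1 - eps_thm t) / a"
  proof -
    have "P t (xs t) = exp (- s t) * a + (1 - exp (- s t)) * (1 - eps_thm t)"
      unfolding a_def k P_suc by (simp add: eps_thm_def add.commute)
    then show ?thesis using apos unfolding w_def a_def[symmetric] by (simp add: field_simps)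
  qed
  have Gb: "G \<ge> q (xs t) * (ln w + s t) - s t"
    using Phi_drop[OF q, of k] x k unfolding G_def w_def by simp
  have main: "ln (1 / a) - ln (1 / q (xs t)) \<le> G / (1 - exp (- s t)) + ln w + s t - ln (1 - eps_thm t)"
    by (rule key_ineq[OF u apos s_pos[OF t(1)] e weq Gb])
  have rr: "r t = ln w + s t - ln (1 - eps_thm t)" unfolding r_def w_def k by simp
  have cG: "G / (1 - exp (- s t)) = c t * Phi k q - c t * Phi t q" unfolding c_def G_def
    by (simp add: diff_divide_distrib right_diff_distrib)
  have Hk: "H T k q = c t * Phi k q" using t k by (simp add: H_def)
  have cm: "c t * Phi k q - c t * Phi t q \<le> H T k q - H T t q + Lam T * dl T t"
  proof (cases "t < T")
    case True
    have Pt: "Phi t q \<le> Lam T" using Phi_bounds[OF q t(1)] Lam_mono[OF t] by linarith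
    have cd: "c (Suc t) - c t \<ge> 0" using c_mono[OF t(1)] by simp
    have "(c (Suc t) - c t) * Phi t q \<le> (c (Suc t) - c t) * Lam T" using Pt cd by (intro mult_left_mono)
    then show ?thesis using True Hk by (simp add: H_def dl_def algebra_simps)
  next
    case False
    have "0 \<le> c t * Phi t q" using c_pos[OF t(1)] Phi_bounds[OF q t(1)] by simp
    then show ?thesis using False Hk by (simp add: H_def dl_def)
  qed
  show ?thesis using main rr cG cm k by (simp add: a_def)
qed

lemma segment_ineq:
  assumes ab: "1 \<le> a" "a \<le> b" "b \<le> T + 1" and q: "is_dist N q"
    and good: "\<forall>t\<in>{a..<b}. xs t \<in> {1..N} \<and> q (xs t) > 0"
  shows "(\<Sum>t\<in>{a..<b}. ln (1 / P (t - 1) (xs t)) - ln (1 / q (xs t)))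
     \<le> H T (a - 1) q - H T (b - 1) q + (\<Sum>t\<in>{a..<b}. Lam T * dl T t + r t)"
  using ab good
proof (induction b)
  case 0 then show ?case by simp
next
  case (Suc b)
  show ?case
  proof (cases "a = Suc b")
    case True then show ?thesis by simp
  next
    case False
    then have ab': "a \<le> b" using Suc by simp
    have IH: "(\<Sum>t\<in>{a..<b}. ln (1 / P (t - 1) (xs t)) - ln (1 / q (xs t)))
     \<le> H T (a - 1) q - H T (b - 1) q + (\<Sum>t\<in>{a..<b}. Lam T * dl T t + r t)"
      using Suc ab' by auto
    have bt: "1 \<le> b" "b \<le> T" using Suc ab' by auto
    have gb: "xs b \<in> {1..N}" "q (xs b) > 0" using Suc.prems ab' by auto
    have st: "ln (1 / P (b - 1) (xs b)) - ln (1 / q (xs b)) \<le> H T (b - 1) q - H T b q + Lam T * dl T b + r b"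
      by (rule step_ineq[OF bt q gb])
    show ?thesis using IH st ab' by (simp add: sum.atLeastLessThan_Suc)
  qed
qed

end


lemma ts_lemma:
  fixes ts :: "nat \<Rightarrow> nat" and n i j :: nat
  assumes inc: "\<forall>i\<in>{1..n}. ts i < ts (i + 1)" and ij: "1 \<le> i" "i \<le> j" "j \<le> n + 1"
  shows "ts i + (j - i) \<le> (ts j :: nat)"
  using ij
proof (induction j)
  case 0 then show ?case by simp
next
  case (Suc j)
  show ?case
  proof (cases "i = Suc j")
    case True then show ?thesis by simp
  next
    case False
    then have "i \<le> j" using Suc by simp
    then have "ts i + (j - i) \<le> ts j" using Suc by simp
    moreover have "ts j < ts (j + 1)" using inc Suc \<open>i \<le> j\<close> by auto
    ultimately show ?thesis using \<open>i \<le> j\<close> by simp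
  qed
qed

lemma concat_segs:
  fixes f :: "nat \<Rightarrow> 'a::comm_monoid_add" and ts :: "nat \<Rightarrow> nat" and n m :: nat
  assumes inc: "\<forall>i\<in>{1..n}. ts i < ts (i + 1)" and t1: "ts 1 = 1"
  shows "m \<le> n \<Longrightarrow> (\<Sum>i=1..m. \<Sum>t\<in>{ts i..<ts (i + 1)}. f t) = (\<Sum>t\<in>{1..<ts (m + 1)}. f t)"
proof (induction m)
  case 0 then show ?case using t1 by simp
next
  case (Suc m)
  have a: "1 \<le> ts (Suc m)" using ts_lemma[OF inc, of 1 "Suc m"] Suc t1 by simp
  have b: "ts (Suc m) \<le> ts (Suc m + 1)" using inc Suc by (auto intro: less_imp_le)
  have "(\<Sum>i=1..Suc m. \<Sum>t\<in>{ts i..<ts (i + 1)}. f t) = (\<Sum>t\<in>{1..<ts (m + 1)}. f t) + (\<Sum>t\<in>{ts (Suc m)..<ts (Suc m + 1)}. f t)"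
    using Suc by simp
  also have "\<dots> = (\<Sum>t\<in>{1..<ts (Suc m + 1)}. f t)"
    using sum.atLeastLessThan_concat[OF a b, of f] by simp
  finally show ?case .
qed

lemma shift_sum:
  fixes A B :: "nat \<Rightarrow> real"
  shows "(\<Sum>i=1..Suc m. A i - B i) = A 1 - B (Suc m) + (\<Sum>i=1..m. A (i + 1) - B i)"
  by (induction m) auto

context PSS
begin

lemma sum_dl: assumes "1 \<le> T" shows "(\<Sum>t=1..T. dl T t) = c T - c 1"
proof -
  obtain m where m: "T = Suc m" using assms by (cases T) auto
  have "(\<Sum>t=1..T. dl T t) = (\<Sum>t=1..m. dl T t) + dl T T" using m by simp
  also have "dl T T = 0" by (simp add: dl_def)
  also have "(\<Sum>t=1..m. dl T t) = (\<Sum>t=1..m. c (Suc t) - c t)"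
    using m by (intro sum.cong) (auto simp: dl_def)
  also have "\<dots> = c (Suc m) - c 1" by (rule sum_Suc_diff) simp
  finally show ?thesis using m by simp
qed

lemma main_real:
  assumes T2: "T \<ge> 2" and pws: "is_PWS N T n ts q" and xr: "\<forall>t\<in>{1..T}. xs t \<in> {1..N}"
    and pos: "\<forall>i\<in>{1..n}. \<forall>t\<in>{ts i..<ts (i + 1)}. q i (xs t) > 0"
  shows "(\<Sum>t=1..T. ln (1 / P (t - 1) (xs t))) - (\<Sum>i=1..n. \<Sum>t\<in>{ts i..<ts (i + 1)}. ln (1 / q i (xs t)))
     \<le> (2 + (\<Sum>i=1..n-1. \<Sum>x=1..N. \<bar>q (i + 1) x - q i x\<bar>)) * K T + Lam T + ln (real T + 1) + (\<Sum>y=1..N. ln (1 / p y))"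
proof -
  have n1: "1 \<le> n" and t1: "ts 1 = 1" and tn: "ts (n + 1) = T + 1"
    and inc: "\<forall>i\<in>{1..n}. ts i < ts (i + 1)" and qd: "\<forall>i\<in>{1..n}. is_dist N (q i)"
    using pws unfolding is_PWS_def by auto
  have T1: "1 \<le> T" using T2 by simp
  have tsge: "i \<le> ts i" if "1 \<le> i" "i \<le> n + 1" for i
    using ts_lemma[OF inc, of 1 i] that t1 by simp
  have tsle: "ts i \<le> T + 1 - (n + 1 - i)" if "1 \<le> i" "i \<le> n + 1" for i
    using ts_lemma[OF inc, of i "n + 1"] that tn by simp
  define A where "A i = H T (ts i - 1) (q i)" for i
  define B where "B i = H T (ts (i + 1) - 1) (q i)" for i
  define g where "g t = Lam T * dl T t + r t" for t
  have cat: "(\<Sum>i=1..n. \<Sum>t\<in>{ts i..<ts (i + 1)}. f t) = (\<Sum>t=1..T. f t)" for f :: "nat \<Rightarrow> real"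
  proof -
    have "(\<Sum>i=1..n. \<Sum>t\<in>{ts i..<ts (i + 1)}. f t) = (\<Sum>t\<in>{1..<ts (n + 1)}. f t)"
      by (rule concat_segs[OF inc t1]) simp
    also have "{1..<ts (n + 1)} = {1..T}" using tn by auto
    finally show ?thesis .
  qed
  have "(\<Sum>t=1..T. ln (1 / P (t - 1) (xs t))) - (\<Sum>i=1..n. \<Sum>t\<in>{ts i..<ts (i + 1)}. ln (1 / q i (xs t)))
      = (\<Sum>i=1..n. \<Sum>t\<in>{ts i..<ts (i + 1)}. ln (1 / P (t - 1) (xs t)) - ln (1 / q i (xs t)))"
    using cat[of "\<lambda>t. ln (1 / P (t - 1) (xs t))"] by (simp add: sum_subtractf)
  also have "\<dots> \<le> (\<Sum>i=1..n. A i - B i + (\<Sum>t\<in>{ts i..<ts (i + 1)}. g t))"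
  proof (rule sum_mono)
    fix i assume i: "i \<in> {1..n}"
    have a1: "1 \<le> ts i" using tsge[of i] i by auto
    have ab: "ts i \<le> ts (i + 1)" using inc i by (auto intro: less_imp_le)
    have bT: "ts (i + 1) \<le> T + 1" using tsle[of "i + 1"] i by auto
    have good: "\<forall>t\<in>{ts i..<ts (i + 1)}. xs t \<in> {1..N} \<and> q i (xs t) > 0"
    proof
      fix t assume t: "t \<in> {ts i..<ts (i + 1)}"
      then have "t \<in> {1..T}" using a1 bT by auto
      then show "xs t \<in> {1..N} \<and> q i (xs t) > 0" using xr pos i t by auto
    qed
    show "(\<Sum>t\<in>{ts i..<ts (i + 1)}. ln (1 / P (t - 1) (xs t)) - ln (1 / q i (xs t)))
          \<le> A i - B i + (\<Sum>t\<in>{ts i..<ts (i + 1)}. g t)"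
      using segment_ineq[OF a1 ab bT, of "q i"] qd i good unfolding A_def B_def g_def by auto
  qed
  also have "\<dots> = (\<Sum>i=1..n. A i - B i) + (\<Sum>t=1..T. g t)"
    using cat[of g] by (simp add: sum.distrib)
  also have "(\<Sum>i=1..n. A i - B i) = A 1 - B n + (\<Sum>i=1..n-1. A (i + 1) - B i)"
    using shift_sum[of A B "n - 1"] n1 by simp
  finally have S1: "(\<Sum>t=1..T. ln (1 / P (t - 1) (xs t))) - (\<Sum>i=1..n. \<Sum>t\<in>{ts i..<ts (i + 1)}. ln (1 / q i (xs t)))
     \<le> A 1 - B n + (\<Sum>i=1..n-1. A (i + 1) - B i) + (\<Sum>t=1..T. g t)" .
  have Bn: "B n = 0" using tn by (simp add: B_def H_def)
  have A1: "A 1 = c 1 * Phi 0 (q 1)" using t1 T1 by (simp add: A_def H_def)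
  have trans: "A (i + 1) - B i \<le> K T * (\<Sum>x=1..N. \<bar>q (i + 1) x - q i x\<bar>)" if i: "i \<in> {1..n-1}" for i
  proof -
    define tau where "tau = ts (i + 1) - 1"
    have i1: "1 \<le> i" "i + 1 \<le> n + 1" using i by auto
    have "i + 1 \<le> ts (i + 1)" using tsge[of "i + 1"] i1 by linarith
    then have tau1: "1 \<le> tau" using i1 by (simp add: tau_def)
    have i2: "i + 1 \<le> n" using i n1 by auto
    have "ts (i + 1) \<le> T + 1 - (n + 1 - (i + 1))" using tsle[of "i + 1"] i1 by linarith
    then have tauT: "tau + 1 \<le> T" using i2 \<open>i + 1 \<le> ts (i + 1)\<close> by (simp add: tau_def)
    have eqd: "A (i + 1) - B i = c (Suc tau) * (Phi tau (q (i + 1)) - Phi tau (q i))"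
      using tauT unfolding A_def B_def H_def tau_def[symmetric] by (simp add: algebra_simps)
    have qi: "is_dist N (q i)" "is_dist N (q (i + 1))" using qd i by auto
    have "Phi tau (q (i + 1)) - Phi tau (q i) \<le> Lam tau / 2 * (\<Sum>x=1..N. \<bar>q (i + 1) x - q i x\<bar>)"
      by (rule Phi_diff[OF qi tau1])
    then have "c (Suc tau) * (Phi tau (q (i + 1)) - Phi tau (q i)) \<le> c (Suc tau) * (Lam tau / 2 * (\<Sum>x=1..N. \<bar>q (i + 1) x - q i x\<bar>))"
      using c_pos[of "Suc tau"] by (intro mult_left_mono) auto
    also have "\<dots> = (c (tau + 1) * (Lam tau / 2)) * (\<Sum>x=1..N. \<bar>q (i + 1) x - q i x\<bar>)" by simp
    also have "\<dots> \<le> K T * (\<Sum>x=1..N. \<bar>q (i + 1) x - q i x\<bar>)"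
      using trans_bound[OF tau1 tauT] by (intro mult_right_mono sum_nonneg) auto
    finally show ?thesis using eqd by simp
  qed
  have S2: "(\<Sum>i=1..n-1. A (i + 1) - B i) \<le> K T * (\<Sum>i=1..n-1. \<Sum>x=1..N. \<bar>q (i + 1) x - q i x\<bar>)"
  proof -
    have "(\<Sum>i=1..n-1. A (i + 1) - B i) \<le> (\<Sum>i=1..n-1. K T * (\<Sum>x=1..N. \<bar>q (i + 1) x - q i x\<bar>))"
      using trans by (rule sum_mono)
    then show ?thesis by (simp only: sum_distrib_left)
  qed
  have Sg: "(\<Sum>t=1..T. g t) = Lam T * (c T - c 1) + (\<Sum>t=1..T. r t)"
    using sum_dl[OF T1] unfolding g_def by (simp add: sum.distrib sum_distrib_left[symmetric])
  have Sr: "(\<Sum>t=1..T. r t) \<le> (\<Sum>y=1..N. ln (1 / p y)) + K T + ln (real T + 1)"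
  proof -
    have "(\<Sum>t=1..T. r t) = (\<Sum>t=1..T. ln (P t (xs t) / P (t - 1) (xs t))) + (\<Sum>t=1..T. s t) + (\<Sum>t=1..T. - ln (1 - eps_thm t))"
      unfolding r_def by (simp add: sum.distrib sum_subtractf sum_negf)
    also have "\<dots> \<le> (\<Sum>y=1..N. ln (1 / p y)) + (real N - 1) * (\<Sum>t=1..T. s t) + (\<Sum>t=1..T. s t) + ln (real T + 1)"
      using sum_lnw[OF xr] sum_eps[of T] by linarith
    also have "\<dots> = (\<Sum>y=1..N. ln (1 / p y)) + real N * (\<Sum>t=1..T. s t) + ln (real T + 1)"
      by (simp add: algebra_simps)
    also have "\<dots> \<le> (\<Sum>y=1..N. ln (1 / p y)) + K T + ln (real T + 1)" using sum_s[OF T1] by simp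
    finally show ?thesis .
  qed
  have Ph0: "Phi 0 (q 1) \<le> Lam T" using Phi0_bound[of "q 1"] qd n1 Lam_mono[OF order_refl T1] by auto
  have c1: "c 1 > 0" using c_pos by simp
  have "c 1 * Phi 0 (q 1) + Lam T * (c T - c 1) \<le> c 1 * Lam T + Lam T * (c T - c 1)"
    using Ph0 c1 by (intro add_right_mono mult_left_mono) auto
  also have "\<dots> = c T * Lam T" by (simp add: algebra_simps)
  also have "\<dots> \<le> Lam T + K T" by (rule end_bound[OF T1])
  finally have S3: "c 1 * Phi 0 (q 1) + Lam T * (c T - c 1) \<le> Lam T + K T" .
  show ?thesis using S1 Bn A1 S2 Sg Sr S3 by (simp add: algebra_simps)
qed

end


lemma final_arith:
  fixes N T :: nat and Sp :: real
  assumes N2: "N \<ge> 2" and T2: "T \<ge> 2" and Sp: "Sp \<le> real N * ln (2 * real N)"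
  shows "ln (real N * (real T + 1)) + ln (real T + 1) + Sp
     \<le> sqrt (128 * real N * real T / ln (real T)) + (4 + 2 * ln (2 * real N) / ln 2) * real N * ln (real T)"
proof -
  define LT where "LT = ln (real T)"
  have l2: "ln (2::real) > 0" by simp
  have LT2: "LT \<ge> ln 2" unfolding LT_def using T2 by simp
  have LTp: "LT > 0" using LT2 l2 by linarith
  have lnN: "ln (2 * real N) \<ge> 0" using N2 by simp
  have a: "ln (real T + 1) \<le> 2 * LT"
  proof -
    have "real T + 1 \<le> real T * real T"
    proof -
      have "2 * real T \<le> real T * real T" using T2 by (intro mult_right_mono) auto
      then show ?thesis using T2 by linarith
    qed
    then have "ln (real T + 1) \<le> ln (real T * real T)" using T2 by (intro ln_mono) auto
    also have "\<dots> = 2 * LT" unfolding LT_def using T2 by (simp add: ln_mult)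
    finally show ?thesis .
  qed
  have b: "ln (real N * (real T + 1)) = ln (real N) + ln (real T + 1)" using N2 by (simp add: ln_mult)
  have c: "ln (real N) \<le> ln (2 * real N)" using N2 by (intro ln_mono) auto
  have d: "ln (2 * real N) \<le> real N * ln (2 * real N)"
  proof -
    have "1 * ln (2 * real N) \<le> real N * ln (2 * real N)" using N2 lnN by (intro mult_right_mono) auto
    then show ?thesis by simp
  qed
  have e: "4 * LT \<le> 4 * real N * LT" using N2 LTp by simp
  have f: "2 * real N * ln (2 * real N) \<le> 2 * ln (2 * real N) / ln 2 * real N * LT"
  proof -
    have "1 \<le> LT / ln 2" using LT2 l2 by (simp add: field_simps)
    then have "2 * real N * ln (2 * real N) * 1 \<le> 2 * real N * ln (2 * real N) * (LT / ln 2)"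
      using lnN by (intro mult_left_mono) auto
    then show ?thesis by (simp add: divide_simps mult.assoc mult.left_commute)
  qed
  have g: "0 \<le> sqrt (128 * real N * real T / ln (real T))" using LTp unfolding LT_def by simp
  have "ln (real N * (real T + 1)) + ln (real T + 1) + Sp \<le> 4 * LT + 2 * real N * ln (2 * real N)"
    using a b c d Sp by linarith
  also have "\<dots> \<le> (4 + 2 * ln (2 * real N) / ln 2) * real N * ln (real T)"
    using e f unfolding LT_def by (simp add: algebra_simps)
  finally show ?thesis using g by linarith
qed

context PSS begin

lemma Sp_bound: "(\<Sum>y=1..N. ln (1 / p y)) \<le> real N * ln (2 * real N)"
proof -
  have "(\<Sum>y=1..N. ln (1 / p y)) \<le> (\<Sum>y=1..N. ln (2 * real N))"
  proof (rule sum_mono)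
    fix y assume y: "y \<in> {1..N}"
    have pp: "p y > 0" using P_pos[OF y, of 0] by (simp add: P_def)
    have "p y \<ge> 1 / (2 * (real N - 1))" using pb y by (simp add: eps_thm_def)
    moreover have "1 / (2 * real N) \<le> 1 / (2 * (real N - 1))" using N2 by (intro divide_left_mono) auto
    ultimately have "1 / (2 * real N) \<le> p y" by linarith
    then have "1 / p y \<le> 2 * real N" using pp N2 by (simp add: field_simps)
    then show "ln (1 / p y) \<le> ln (2 * real N)" using pp by (intro ln_mono) auto
  qed
  then show ?thesis by simp
qed

end

theorem theorem2:
  fixes N :: nat and p :: "nat \<Rightarrow> real"
  assumes "N \<ge> 2"
    and "is_dist N p"
    and "\<forall>x\<in>{1..N}. p x \<ge> eps_thm 1 / (real N - 1)"
  shows "\<exists>c T0. \<forall>T \<ge> T0. \<forall>n ts q xs.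
           T \<ge> 2 \<and> is_PWS N T n ts q \<and> (\<forall>t\<in>{1..T}. xs t \<in> {1..N}) \<longrightarrow>
           code_len_PS N (alpha_thm N) eps_thm p xs T
             \<le> code_len_PWS n ts q xs
               + ereal (sqrt (2 * real N * (real T + 1) * ln (real N * (real T + 1)))
                          * (1 + complexity_PWS N n q)
                        + sqrt (128 * real N * real T / ln (real T))
                        + c * real N * ln (real T))"
proof (intro exI allI impI)
  fix T n ts q xs
  assume H: "T \<ge> 2 \<and> is_PWS N T n ts q \<and> (\<forall>t\<in>{1..T}. xs t \<in> {1..N})"
  then have T2: "T \<ge> 2" and pws: "is_PWS N T n ts q" and xr: "\<forall>t\<in>{1..T}. xs t \<in> {1..N}" by auto
  interpret PSS N p xs using assms by unfold_locales
  define Z where "Z = sqrt (2 * real N * (real T + 1) * ln (real N * (real T + 1))) * (1 + complexity_PWS N n q)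
                        + sqrt (128 * real N * real T / ln (real T))
                        + (4 + 2 * ln (2 * real N) / ln 2) * real N * ln (real T)"
  have PSeq: "code_len_PS N (alpha_thm N) eps_thm p xs T = ereal (\<Sum>t=1..T. ln (1 / P (t - 1) (xs t)))"
  proof -
    have "code_len_PS N (alpha_thm N) eps_thm p xs T = (\<Sum>t=1..T. ereal (ln (1 / P (t - 1) (xs t))))"
      unfolding code_len_PS_def P_def[symmetric]
    proof (rule sum.cong[OF refl])
      fix t assume t: "t \<in> {1..T}"
      have "P (t - 1) (xs t) > 0" using P_pos xr t by auto
      then show "nlog (P (t - 1) (xs t)) = ereal (ln (1 / P (t - 1) (xs t)))" by (simp add: nlog_def)
    qed
    then show ?thesis by simp
  qed
  show "code_len_PS N (alpha_thm N) eps_thm p xs T \<le> code_len_PWS n ts q xs + ereal Z"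
  proof (cases "\<forall>i\<in>{1..n}. \<forall>t\<in>{ts i..<ts (i + 1)}. q i (xs t) > 0")
    case True
    have PWSeq: "code_len_PWS n ts q xs = ereal (\<Sum>i=1..n. \<Sum>t\<in>{ts i..<ts (i + 1)}. ln (1 / q i (xs t)))"
    proof -
      have "code_len_PWS n ts q xs = (\<Sum>i=1..n. \<Sum>t\<in>{ts i..<ts (i + 1)}. ereal (ln (1 / q i (xs t))))"
        unfolding code_len_PWS_def
      proof (intro sum.cong refl)
        fix i t assume i: "i \<in> {1..n}" and t: "t \<in> {ts i..<ts (i + 1)}"
        then have "q i (xs t) > 0" using True by blast
        then show "nlog (q i (xs t)) = ereal (ln (1 / q i (xs t)))" by (simp add: nlog_def)
      qed
      then show ?thesis by simp
    qed
    have m: "(\<Sum>t=1..T. ln (1 / P (t - 1) (xs t))) - (\<Sum>i=1..n. \<Sum>t\<in>{ts i..<ts (i + 1)}. ln (1 / q i (xs t)))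
     \<le> (2 + (\<Sum>i=1..n-1. \<Sum>x=1..N. \<bar>q (i + 1) x - q i x\<bar>)) * K T + Lam T + ln (real T + 1) + (\<Sum>y=1..N. ln (1 / p y))"
      by (rule main_real[OF T2 pws xr True])
    have fa: "Lam T + ln (real T + 1) + (\<Sum>y=1..N. ln (1 / p y))
      \<le> sqrt (128 * real N * real T / ln (real T)) + (4 + 2 * ln (2 * real N) / ln 2) * real N * ln (real T)"
      unfolding Lam_def by (rule final_arith[OF assms(1) T2 Sp_bound])
    have "(2 + (\<Sum>i=1..n-1. \<Sum>x=1..N. \<bar>q (i + 1) x - q i x\<bar>)) * K T
       = sqrt (2 * real N * (real T + 1) * ln (real N * (real T + 1))) * (1 + complexity_PWS N n q)"
      unfolding K_def complexity_PWS_def by (simp add: algebra_simps)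
    then have "(\<Sum>t=1..T. ln (1 / P (t - 1) (xs t))) \<le> (\<Sum>i=1..n. \<Sum>t\<in>{ts i..<ts (i + 1)}. ln (1 / q i (xs t))) + Z"
      using m fa unfolding Z_def by linarith
    then show ?thesis unfolding PSeq PWSeq by simp
  next
    case False
    then obtain i t where i: "i \<in> {1..n}" and t: "t \<in> {ts i..<ts (i + 1)}" and bad: "\<not> q i (xs t) > 0" by auto
    have "(\<Sum>t\<in>{ts i..<ts (i + 1)}. nlog (q i (xs t))) = \<infinity>"
      using t bad by (subst sum_Pinfty) (auto simp: nlog_def intro!: bexI[of _ t])
    then have "code_len_PWS n ts q xs = \<infinity>"
      unfolding code_len_PWS_def using i by (subst sum_Pinfty) auto
    then show ?thesis by simp
  qed
qed


end
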